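(* Let $(\mathcal G,\alpha)$ be a matching model such that $\alpha$ satisfies the stability condition $|\alpha_{\mathcal I}|<|\alpha_{\mathcal E(\mathcal I)}|$ for all $\mathcal I\in\mathbb I$. Then the stationary mean number of items under FCFS equals $$\mathbb E[Q]=\Big(1+\sum_{\mathcal I\in\mathbb I}T_{\mathcal I}\Big)^{-1}\Big(\sum_{\mathcal I\in\mathbb I}E_{\mathcal I}\Big).$$
   Context: A matching model consists of a finite connected simple graph $\mathcal G=(\mathcal V,\xi)$ (the compatibility graph), $\mathcal V=\{1,\dots,n\}$, and a probability distribution $\alpha=(\alpha_1,\dots,\alpha_n)$ on $\mathcal V$ with all $\alpha_i>0$. In each time step an item of class $i$ arrives with probability proportional to $\alpha_i$. For $i\in\mathcal V$ let $\mathcal E(i)$ be the set of neighbours of $i$; for $V\subseteq\mathcal V$ let $\mathcal E(V)=\bigcup_{i\in V}\mathcal E(i)$ and $|\alpha_V|=\sum_{i\in V}\alpha_i$. The state is a finite word $w=w_1\cdots w_q$ over $\mathcal V$ with no two letters adjacent in $\mathcal G$ (unmatched items in order of arrival). Under FCFS, if an item of class $i$ arrives in state $w$ and some letter of $w$ lies in $\mathcal E(i)$, the first such letter is deleted; otherwise $i$ is appended. An independent set is a non-empty subset of $\mathcal V$ with no two elements adjacent; $\mathbb I$ is the set of independent sets. Under the stability condition the chain is positive recurrent with stationary distribution $\pi(w)=\pi_0\prod_{i=1}^q\alpha_{w_i}/|\alpha_{\mathcal E(\{w_1,\dots,w_i\})}|$, and $\mathbb E[Q]=\sum_w |w|\pi(w)$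 where $|w|$ is the length of $w$. For $\mathcal I\in\mathbb I$ and an ordering $(i_1,\dots,i_m)$ of its elements ($m=|\mathcal I|$), write $\mathcal I_k=\{i_1,\dots,i_k\}$ and $$T_{(i_1,\dots,i_m)}=\prod_{k=1}^m\frac{\alpha_{i_k}}{|\alpha_{\mathcal E(\mathcal I_k)}|-|\alpha_{\mathcal I_k}|},\qquad E_{(i_1,\dots,i_m)}=\sum_{l=1}^m\frac{|\alpha_{\mathcal E(\mathcal I_l)}|}{|\alpha_{\mathcal E(\mathcal I_l)}|-|\alpha_{\mathcal I_l}|}\,T_{(i_1,\dots,i_m)}.$$ $T_{\mathcal I}$ (resp. $E_{\mathcal I}$) is the sum of $T_{(i_1,\dots,i_m)}$ (resp. $E_{(i_1,\dots,i_m)}$) over all $m!$ orderings of $\mathcal I$. *)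

theory Defs
  imports "HOL-Analysis.Analysis" "HOL-Combinatorics.Multiset_Permutations"
begin

definition simple_graph_on :: "nat set \<Rightarrow> (nat \<Rightarrow> nat \<Rightarrow> bool) \<Rightarrow> bool" where
  "simple_graph_on V Ed \<longleftrightarrow> (\<forall>i j. Ed i j \<longrightarrow> i \<in> V \<and> j \<in> V)
     \<and> (\<forall>i j. Ed i j \<longrightarrow> Ed j i) \<and> (\<forall>i. \<not> Ed i i)"

definition graph_connected :: "nat set \<Rightarrow> (nat \<Rightarrow> nat \<Rightarrow> bool) \<Rightarrow> bool" where
  "graph_connected V Ed \<longleftrightarrow> (\<forall>i\<in>V. \<forall>j\<in>V. Ed\<^sup>*\<^sup>* i j)"

definition nbrs :: "(nat \<Rightarrow> nat \<Rightarrow> bool) \<Rightarrow> nat set \<Rightarrow> nat set" where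
  "nbrs Ed S = {j. \<exists>i\<in>S. Ed i j}"

definition asum :: "(nat \<Rightarrow> real) \<Rightarrow> nat set \<Rightarrow> real" where
  "asum \<alpha> S = (\<Sum>i\<in>S. \<alpha> i)"

definition indep_sets :: "nat set \<Rightarrow> (nat \<Rightarrow> nat \<Rightarrow> bool) \<Rightarrow> nat set set" where
  "indep_sets V Ed = {I. I \<subseteq> V \<and> I \<noteq> {} \<and> (\<forall>i\<in>I. \<forall>j\<in>I. \<not> Ed i j)}"

definition states :: "nat set \<Rightarrow> (nat \<Rightarrow> nat \<Rightarrow> bool) \<Rightarrow> nat list set" where
  "states V Ed = {w. set w \<subseteq> V \<and> (\<forall>a\<in>set w. \<forall>b\<in>set w. \<not> Ed a b)}"

definition pweight :: "(nat \<Rightarrow> nat \<Rightarrow> bool) \<Rightarrow> (nat \<Rightarrow> real) \<Rightarrow> nat list \<Rightarrow> real" where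
  "pweight Ed \<alpha> w = (\<Prod>k<length w. \<alpha> (w ! k) / asum \<alpha> (nbrs Ed (set (take (Suc k) w))))"

definition stat_pi :: "nat set \<Rightarrow> (nat \<Rightarrow> nat \<Rightarrow> bool) \<Rightarrow> (nat \<Rightarrow> real) \<Rightarrow> nat list \<Rightarrow> real" where
  "stat_pi V Ed \<alpha> w = inverse (\<Sum>\<^sub>\<infinity>u\<in>states V Ed. pweight Ed \<alpha> u) * pweight Ed \<alpha> w"

definition T_ord :: "(nat \<Rightarrow> nat \<Rightarrow> bool) \<Rightarrow> (nat \<Rightarrow> real) \<Rightarrow> nat list \<Rightarrow> real" where
  "T_ord Ed \<alpha> xs = (\<Prod>k<length xs. \<alpha> (xs ! k) /
      (asum \<alpha> (nbrs Ed (set (take (Suc k) xs))) - asum \<alpha> (set (take (Suc k) xs))))"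

definition E_ord :: "(nat \<Rightarrow> nat \<Rightarrow> bool) \<Rightarrow> (nat \<Rightarrow> real) \<Rightarrow> nat list \<Rightarrow> real" where
  "E_ord Ed \<alpha> xs = (\<Sum>l<length xs. asum \<alpha> (nbrs Ed (set (take (Suc l) xs))) /
      (asum \<alpha> (nbrs Ed (set (take (Suc l) xs))) - asum \<alpha> (set (take (Suc l) xs)))) * T_ord Ed \<alpha> xs"

definition T_set :: "(nat \<Rightarrow> nat \<Rightarrow> bool) \<Rightarrow> (nat \<Rightarrow> real) \<Rightarrow> nat set \<Rightarrow> real" where
  "T_set Ed \<alpha> I = (\<Sum>xs\<in>permutations_of_set I. T_ord Ed \<alpha> xs)"

definition E_set :: "(nat \<Rightarrow> nat \<Rightarrow> bool) \<Rightarrow> (nat \<Rightarrow> real) \<Rightarrow> nat set \<Rightarrow> real" where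
  "E_set Ed \<alpha> I = (\<Sum>xs\<in>permutations_of_set I. E_ord Ed \<alpha> xs)"

end

theory Submission imports Defs begin

lemma prod_has_sum:
  fixes f g :: "_ \<Rightarrow> real"
  assumes "(f has_sum F) A" "(g has_sum G) B"
    and "\<And>x. x \<in> A \<Longrightarrow> f x \<ge> 0" "\<And>y. y \<in> B \<Longrightarrow> g y \<ge> 0"
  shows "((\<lambda>(x,y). f x * g y) has_sum (F * G)) (A \<times> B)"
proof -
  have inner: "((\<lambda>y. (\<lambda>(x,y). f x * g y) (x, y)) has_sum f x * G) B" if "x \<in> A" for x
    using has_sum_cmult_right[OF assms(2), of "f x"] by simp
  have outer: "((\<lambda>x. f x * G) has_sum F * G) A"
    using has_sum_cmult_left[OF assms(1)] .
  have summ: "(\<lambda>(x,y). f x * g y) summable_on Sigma A (\<lambda>_. B)"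
    by (rule summable_on_SigmaI[OF inner]) (use outer has_sum_imp_summable assms(3,4) in auto)
  show ?thesis
    using has_sum_SigmaI[OF inner outer summ] by simp
qed

lemma lists_len_sum:
  fixes c :: "nat \<Rightarrow> real"
  assumes "finite S"
  shows "(\<Sum>u\<in>{u. set u \<subseteq> S \<and> length u = k}. prod_list (map c u)) = (sum c S) ^ k"
proof (induction k)
  case 0
  have "{u. set u \<subseteq> S \<and> length u = 0} = {[]}" by auto
  then show ?case by simp
next
  case (Suc k)
  have eq: "{u. set u \<subseteq> S \<and> length u = Suc k} = (\<lambda>(a,u). a#u) ` (S \<times> {u. set u \<subseteq> S \<and> length u = k})"
    by (auto simp: length_Suc_conv image_iff)
  have inj: "inj_on (\<lambda>(a,u). a#u) (S \<times> {u. set u \<subseteq> S \<and> length u = k})"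
    by (auto simp: inj_on_def)
  have "(\<Sum>u\<in>{u. set u \<subseteq> S \<and> length u = Suc k}. prod_list (map c u))
      = (\<Sum>(a,u)\<in>S \<times> {u. set u \<subseteq> S \<and> length u = k}. c a * prod_list (map c u))"
    unfolding eq by (subst sum.reindex[OF inj]) (simp add: case_prod_unfold)
  also have "\<dots> = sum c S * (\<Sum>u\<in>{u. set u \<subseteq> S \<and> length u = k}. prod_list (map c u))"
    by (simp add: sum_product sum.cartesian_product)
  finally show ?case using Suc by simp
qed

lemma geom_lists:
  fixes c :: "nat \<Rightarrow> real"
  assumes S: "finite S" and nn: "\<And>x. x \<in> S \<Longrightarrow> c x \<ge> 0" and r1: "sum c S < 1"
  shows "((\<lambda>u. prod_list (map c u)) has_sum (1 / (1 - sum c S))) (lists S)"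
    and "((\<lambda>u. real (length u) * prod_list (map c u)) has_sum (sum c S / (1 - sum c S)^2)) (lists S)"
proof -
  define r where "r = sum c S"
  have r0: "r \<ge> 0" unfolding r_def using nn by (simp add: sum_nonneg)
  have r1': "r < 1" using r1 r_def by simp
  define L where "L k = {u. set u \<subseteq> S \<and> length u = k}" for k :: nat
  have finL: "finite (L k)" for k unfolding L_def using finite_lists_length_eq[OF S] by simp
  have pnn: "prod_list (map c u) \<ge> 0" if "u \<in> lists S" for u
    using that nn by (induction u) auto
  have bij: "\<And>h s. (h has_sum s) (lists S) \<longleftrightarrow> ((\<lambda>(k,u). h u) has_sum s) (Sigma UNIV L)"
    by (rule has_sum_reindex_bij_witness[where j = "\<lambda>u. (length u, u)" and i = snd])
       (auto simp: L_def)
  have g1: "((\<lambda>k. r ^ k) has_sum (1 / (1 - r))) UNIV"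
    by (rule sums_nonneg_imp_has_sum) (use geometric_sums[of r] r0 r1' in auto)
  have "(\<lambda>n. real (Suc n) * r ^ n) sums (1 / (1 - r)^2)"
    using geometric_deriv_sums[of r] r0 r1' by simp
  from sums_diff[OF this geometric_sums[of r]]
  have "(\<lambda>n. real n * r ^ n) sums (1 / (1 - r)^2 - 1 / (1 - r))" using r0 r1' by (simp add: algebra_simps)
  moreover have "1 / (1 - r)^2 - 1 / (1 - r) = r / (1 - r)^2"
  proof -
    have nz: "1 - r \<noteq> 0" using r1' by simp
    have a: "1/(1-r) = (1-r)/(1-r)^2" using nz by (simp add: power2_eq_square)
    show ?thesis unfolding a by (simp add: diff_divide_distrib[symmetric])
  qed
  ultimately have g2: "((\<lambda>k. real k * r ^ k) has_sum (r / (1 - r)^2)) UNIV"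
    by (intro sums_nonneg_imp_has_sum) (use r0 in auto)
  have in1: "((\<lambda>u. (\<lambda>(k,u). prod_list (map c u)) (k,u)) has_sum r ^ k) (L k)" for k
  proof -
    have "(\<Sum>u\<in>L k. prod_list (map c u)) = r ^ k"
      using lists_len_sum[OF S, of c k] by (simp add: L_def r_def)
    then show ?thesis by (intro has_sum_finiteI[OF finL]) simp
  qed
  have in2: "((\<lambda>u. (\<lambda>(k,u). real (length u) * prod_list (map c u)) (k,u)) has_sum real k * r ^ k) (L k)" for k
  proof -
    have "(\<Sum>u\<in>L k. real (length u) * prod_list (map c u)) = real k * r ^ k"
      using lists_len_sum[OF S, of c k] by (simp add: L_def r_def sum_distrib_left[symmetric])
    then show ?thesis by (intro has_sum_finiteI[OF finL]) simp
  qed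
  have nnS: "\<And>k u. k \<in> UNIV \<Longrightarrow> u \<in> L k \<Longrightarrow> 0 \<le> prod_list (map c u)"
    using pnn by (auto simp: L_def)
  show "((\<lambda>u. prod_list (map c u)) has_sum (1 / (1 - sum c S))) (lists S)"
    unfolding bij r_def[symmetric]
    by (rule has_sum_SigmaI[OF in1 g1], rule summable_on_SigmaI[OF in1])
       (use g1 has_sum_imp_summable nnS in auto)
  show "((\<lambda>u. real (length u) * prod_list (map c u)) has_sum (sum c S / (1 - sum c S)^2)) (lists S)"
    unfolding bij r_def[symmetric]
    by (rule has_sum_SigmaI[OF in2 g2], rule summable_on_SigmaI[OF in2])
       (use g2 has_sum_imp_summable nnS in auto)
qed

fun pw :: "(nat \<Rightarrow> nat \<Rightarrow> bool) \<Rightarrow> (nat \<Rightarrow> real) \<Rightarrow> nat set \<Rightarrow> nat list \<Rightarrow> real" where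
  "pw Ed \<alpha> S [] = 1"
| "pw Ed \<alpha> S (a # q) = \<alpha> a / asum \<alpha> (nbrs Ed (insert a S)) * pw Ed \<alpha> (insert a S) q"

lemma pw_prod:
  "(\<Prod>k<length q. \<alpha> (q ! k) / asum \<alpha> (nbrs Ed (S \<union> set (take (Suc k) q)))) = pw Ed \<alpha> S q"
proof (induction q arbitrary: S)
  case Nil
  then show ?case by simp
next
  case (Cons a q)
  have "(\<Prod>k<length (a # q). \<alpha> ((a # q) ! k) / asum \<alpha> (nbrs Ed (S \<union> set (take (Suc k) (a # q)))))
      = \<alpha> a / asum \<alpha> (nbrs Ed (insert a S)) *
        (\<Prod>k<length q. \<alpha> (q ! k) / asum \<alpha> (nbrs Ed (insert a S \<union> set (take (Suc k) q))))"
    by (simp add: prod.lessThan_Suc_shift del: prod.lessThan_Suc)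
  also have "\<dots> = pw Ed \<alpha> S (a # q)" using Cons[of "insert a S"] by simp
  finally show ?case .
qed

lemma pweight_pw: "pweight Ed \<alpha> w = pw Ed \<alpha> {} w"
  unfolding pweight_def using pw_prod[where S="{}" and q=w] by simp

lemma pw_append: "pw Ed \<alpha> S (p @ q) = pw Ed \<alpha> S p * pw Ed \<alpha> (S \<union> set p) q"
  by (induction p arbitrary: S) auto

lemma pw_lists: "set u \<subseteq> S \<Longrightarrow> pw Ed \<alpha> S u = prod_list (map (\<lambda>x. \<alpha> x / asum \<alpha> (nbrs Ed S)) u)"
  by (induction u) (auto simp: insert_absorb)

fun Wr :: "nat list \<Rightarrow> nat list set" where
  "Wr [] = {[]}"
| "Wr (i # ys) = (\<lambda>(p, u). p @ i # u) ` (Wr ys \<times> lists (insert i (set ys)))"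

lemma Wr_set: "w \<in> Wr ys \<Longrightarrow> set w = set ys"
  by (induction ys arbitrary: w) auto

lemma Wr_remdups: "distinct ys \<Longrightarrow> w \<in> Wr ys \<Longrightarrow> remdups (rev w) = ys"
proof (induction ys arbitrary: w)
  case Nil
  then show ?case by simp
next
  case (Cons i ys)
  then obtain p u where w: "w = p @ i # u" and p: "p \<in> Wr ys" and u: "u \<in> lists (insert i (set ys))"
    by auto
  have sp: "set p = set ys" using Wr_set[OF p] .
  have "remdups (rev w) = remdups (rev u @ (i # rev p))" by (simp add: w)
  also have "\<dots> = remdups (i # rev p)"
    by (rule remdups_append) (use u sp in auto)
  also have "\<dots> = i # ys" using Cons sp p by simp
  finally show ?case .
qed

lemma Wr_cover: "w \<in> Wr (remdups (rev w))"
proof (induction w rule: rev_induct)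
  case Nil
  then show ?case by simp
next
  case (snoc c v)
  show ?case
  proof (cases "c \<in> set v")
    case False
    have "v @ [c] = (\<lambda>(p, u). p @ c # u) (v, [])" by simp
    then show ?thesis using False snoc by (auto simp: image_iff)
  next
    case True
    then have "v \<noteq> []" by auto
    then obtain i ys where g: "remdups (rev v) = i # ys"
      by (metis list.exhaust remdups_eq_nil_iff rev_is_Nil_conv)
    have sv: "set v = insert i (set ys)"
      using arg_cong[OF g, of set] by simp
    from snoc g obtain p u where v: "v = p @ i # u" and p: "p \<in> Wr ys" and u: "u \<in> lists (insert i (set ys))"
      by auto
    have calc: "v @ [c] = (\<lambda>(p, u). p @ i # u) (p, u @ [c])" by (simp add: v)
    have mem: "(p, u @ [c]) \<in> Wr ys \<times> lists (insert i (set ys))"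
      using p u True sv by auto
    have eq: "remdups (rev (v @ [c])) = i # ys" using True g by simp
    show ?thesis unfolding eq Wr.simps by (rule image_eqI[where f="\<lambda>(p, u). p @ i # u", OF calc mem])
  qed
qed

lemma Wr_inj: "distinct (i # ys) \<Longrightarrow> inj_on (\<lambda>(p, u). p @ i # u) (Wr ys \<times> lists (insert i (set ys)))"
proof (rule inj_onI, clarsimp)
  fix p u p' u'
  assume d: "i \<notin> set ys" and p: "p \<in> Wr ys" and p': "p' \<in> Wr ys" and e: "p @ i # u = p' @ i # u'"
  have "i \<notin> set p" "i \<notin> set p'" using d Wr_set[OF p] Wr_set[OF p'] by auto
  then have "takeWhile (\<lambda>x. x \<noteq> i) (p @ i # u) = p" "takeWhile (\<lambda>x. x \<noteq> i) (p' @ i # u') = p'"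
    by (subst takeWhile_append2; auto)+
  then have "p = p'" using e by simp
  then show "p = p' \<and> u = u'" using e by simp
qed

lemma pw_nonneg:
  assumes "\<forall>x\<in>U. \<alpha> x \<ge> 0" "\<forall>T. T \<subseteq> U \<longrightarrow> T \<noteq> {} \<longrightarrow> asum \<alpha> (nbrs Ed T) \<ge> 0"
  shows "set w \<subseteq> U \<Longrightarrow> S \<subseteq> U \<Longrightarrow> pw Ed \<alpha> S w \<ge> 0"
proof (induction w arbitrary: S)
  case Nil
  then show ?case by simp
next
  case (Cons a w)
  have "pw Ed \<alpha> (insert a S) w \<ge> 0" using Cons by simp
  moreover have "\<alpha> a \<ge> 0" "asum \<alpha> (nbrs Ed (insert a S)) \<ge> 0" using assms Cons.prems by auto
  ultimately show ?case by simp
qed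

definition esum :: "(nat \<Rightarrow> nat \<Rightarrow> bool) \<Rightarrow> (nat \<Rightarrow> real) \<Rightarrow> nat list \<Rightarrow> real" where
  "esum Ed \<alpha> xs = (\<Sum>l<length xs. asum \<alpha> (nbrs Ed (set (take (Suc l) xs))) /
      (asum \<alpha> (nbrs Ed (set (take (Suc l) xs))) - asum \<alpha> (set (take (Suc l) xs))))"

lemma E_ord_esum: "E_ord Ed \<alpha> xs = esum Ed \<alpha> xs * T_ord Ed \<alpha> xs"
  unfolding E_ord_def esum_def by simp

lemma T_ord_snoc: "T_ord Ed \<alpha> (xs @ [i]) = T_ord Ed \<alpha> xs *
   (\<alpha> i / (asum \<alpha> (nbrs Ed (insert i (set xs))) - asum \<alpha> (insert i (set xs))))"
proof -
  have "T_ord Ed \<alpha> (xs @ [i]) = (\<Prod>k<length xs. \<alpha> ((xs@[i]) ! k) /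
      (asum \<alpha> (nbrs Ed (set (take (Suc k) (xs@[i])))) - asum \<alpha> (set (take (Suc k) (xs@[i]))))) *
      (\<alpha> i / (asum \<alpha> (nbrs Ed (insert i (set xs))) - asum \<alpha> (insert i (set xs))))"
    unfolding T_ord_def by simp
  also have "(\<Prod>k<length xs. \<alpha> ((xs@[i]) ! k) /
      (asum \<alpha> (nbrs Ed (set (take (Suc k) (xs@[i])))) - asum \<alpha> (set (take (Suc k) (xs@[i]))))) = T_ord Ed \<alpha> xs"
    unfolding T_ord_def by (rule prod.cong) (auto simp: nth_append)
  finally show ?thesis .
qed

lemma esum_snoc: "esum Ed \<alpha> (xs @ [i]) = esum Ed \<alpha> xs +
   asum \<alpha> (nbrs Ed (insert i (set xs))) / (asum \<alpha> (nbrs Ed (insert i (set xs))) - asum \<alpha> (insert i (set xs)))"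
proof -
  have "esum Ed \<alpha> (xs @ [i]) = (\<Sum>l<length xs. asum \<alpha> (nbrs Ed (set (take (Suc l) (xs@[i])))) /
      (asum \<alpha> (nbrs Ed (set (take (Suc l) (xs@[i])))) - asum \<alpha> (set (take (Suc l) (xs@[i]))))) +
      asum \<alpha> (nbrs Ed (insert i (set xs))) / (asum \<alpha> (nbrs Ed (insert i (set xs))) - asum \<alpha> (insert i (set xs)))"
    unfolding esum_def by simp
  also have "(\<Sum>l<length xs. asum \<alpha> (nbrs Ed (set (take (Suc l) (xs@[i])))) /
      (asum \<alpha> (nbrs Ed (set (take (Suc l) (xs@[i])))) - asum \<alpha> (set (take (Suc l) (xs@[i]))))) = esum Ed \<alpha> xs"
    unfolding esum_def by (rule sum.cong) auto
  finally show ?thesis .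
qed

lemma asum_pos: "finite T \<Longrightarrow> T \<noteq> {} \<Longrightarrow> \<forall>x\<in>T. \<alpha> x > 0 \<Longrightarrow> asum \<alpha> T > 0"
  unfolding asum_def by (rule sum_pos) auto

lemma Wr_sum:
  assumes "distinct ys" "\<forall>x\<in>set ys. \<alpha> x > 0"
    "\<forall>T. T \<subseteq> set ys \<longrightarrow> T \<noteq> {} \<longrightarrow> asum \<alpha> T < asum \<alpha> (nbrs Ed T)"
  shows "(pweight Ed \<alpha> has_sum T_ord Ed \<alpha> (rev ys)) (Wr ys) \<and>
         ((\<lambda>w. real (length w) * pweight Ed \<alpha> w) has_sum E_ord Ed \<alpha> (rev ys)) (Wr ys)"
  using assms
proof (induction ys)
  case Nil
  then show ?case by (auto simp: T_ord_def E_ord_def pweight_def intro!: has_sum_finiteI)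
next
  case (Cons i ys)
  define S where "S = insert i (set ys)"
  define A where "A = asum \<alpha> (nbrs Ed S)"
  define B where "B = asum \<alpha> S"
  define c where "c x = \<alpha> x / A" for x
  define a where "a = \<alpha> i / A"
  have B0: "B > 0" unfolding B_def using Cons.prems(2) by (intro asum_pos) (auto simp: S_def)
  have AB: "B < A" unfolding A_def B_def using Cons.prems(3) by (auto simp: S_def)
  have A0: "A > 0" using AB B0 by simp
  have finS: "finite S" by (simp add: S_def)
  have cnn: "c x \<ge> 0" if "x \<in> S" for x
    using Cons.prems(2) that A0 by (auto simp: c_def S_def intro!: divide_nonneg_pos less_imp_le)
  have sc: "sum c S = B / A" unfolding c_def B_def asum_def by (simp add: sum_divide_distrib)
  have sc1: "sum c S < 1" using sc AB A0 by simp
  note G = geom_lists[OF finS cnn sc1]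
  from Cons.IH Cons.prems have IH:
    "(pweight Ed \<alpha> has_sum T_ord Ed \<alpha> (rev ys)) (Wr ys)"
    "((\<lambda>w. real (length w) * pweight Ed \<alpha> w) has_sum E_ord Ed \<alpha> (rev ys)) (Wr ys)"
    by auto
  define T0 where "T0 = T_ord Ed \<alpha> (rev ys)"
  define e0 where "e0 = esum Ed \<alpha> (rev ys)"
  have E0: "E_ord Ed \<alpha> (rev ys) = e0 * T0" by (simp add: E_ord_esum e0_def T0_def)
  define h where "h = (\<lambda>(p::nat list, u::nat list). p @ i # u)"
  have inj: "inj_on h (Wr ys \<times> lists S)"
    unfolding h_def S_def by (rule Wr_inj) (use Cons.prems in simp)
  have Wi: "Wr (i # ys) = h ` (Wr ys \<times> lists S)" by (simp add: h_def S_def)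
  have pwh: "pweight Ed \<alpha> (h (p, u)) = pweight Ed \<alpha> p * (a * prod_list (map c u))"
    if "p \<in> Wr ys" "u \<in> lists S" for p u
  proof -
    have sp: "set p = set ys" using Wr_set[OF that(1)] .
    have "pweight Ed \<alpha> (h (p, u)) = pw Ed \<alpha> {} p * pw Ed \<alpha> (set p) (i # u)"
      by (simp add: h_def pweight_pw pw_append)
    also have "pw Ed \<alpha> (set p) (i # u) = a * pw Ed \<alpha> S u"
      by (simp add: sp a_def A_def S_def)
    also have "pw Ed \<alpha> S u = prod_list (map c u)"
      using that(2) by (subst pw_lists) (auto simp: c_def[abs_def] A_def)
    finally show ?thesis by (simp add: pweight_pw)
  qed
  have lenh: "length (h (p, u)) = length p + 1 + length u" for p u by (simp add: h_def)
  have pwnn: "pweight Ed \<alpha> p \<ge> 0" if "p \<in> Wr ys" for p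
  proof -
    have "pw Ed \<alpha> {} p \<ge> 0"
    proof (rule pw_nonneg[where U="set ys"])
      show "\<forall>x\<in>set ys. \<alpha> x \<ge> 0" using Cons.prems(2) by (auto intro: less_imp_le)
      show "\<forall>T. T \<subseteq> set ys \<longrightarrow> T \<noteq> {} \<longrightarrow> asum \<alpha> (nbrs Ed T) \<ge> 0"
      proof (intro allI impI)
        fix T assume T: "T \<subseteq> set ys" "T \<noteq> {}"
        have "asum \<alpha> T > 0" using T Cons.prems(2) by (intro asum_pos) (auto intro: finite_subset)
        moreover have "asum \<alpha> T < asum \<alpha> (nbrs Ed T)" using T Cons.prems(3) by auto
        ultimately show "asum \<alpha> (nbrs Ed T) \<ge> 0" by simp
      qed
    qed (use Wr_set[OF that] in auto)
    then show ?thesis by (simp add: pweight_pw)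
  qed
  have lpnn: "real (length p) * pweight Ed \<alpha> p \<ge> 0" if "p \<in> Wr ys" for p
    using pwnn[OF that] by simp
  have a0: "a \<ge> 0" unfolding a_def using Cons.prems(2) A0 by (auto intro!: divide_nonneg_pos less_imp_le)
  have pnn: "prod_list (map c u) \<ge> 0" if "u \<in> lists S" for u
    using that cnn by (induction u) auto
  have g1: "((\<lambda>u. a * prod_list (map c u)) has_sum a * (1 / (1 - sum c S))) (lists S)"
    by (rule has_sum_cmult_right[OF G(1)])
  have g2: "((\<lambda>u. a * (real (length u) * prod_list (map c u))) has_sum a * (sum c S / (1 - sum c S)^2)) (lists S)"
    by (rule has_sum_cmult_right[OF G(2)])
  have g1nn: "a * prod_list (map c u) \<ge> 0" if "u \<in> lists S" for u using a0 pnn[OF that] by simp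
  have g2nn: "a * (real (length u) * prod_list (map c u)) \<ge> 0" if "u \<in> lists S" for u using a0 pnn[OF that] by simp
  note P1 = prod_has_sum[OF IH(1) g1 pwnn g1nn]
  note P2 = prod_has_sum[OF IH(2) g1 lpnn g1nn]
  note P3 = prod_has_sum[OF IH(1) g2 pwnn g2nn]
  have D: "A - B > 0" using AB by simp
  have T1: "T_ord Ed \<alpha> (rev (i # ys)) = T0 * (\<alpha> i / (A - B))"
    by (simp add: T_ord_snoc T0_def A_def B_def S_def)
  have e1: "esum Ed \<alpha> (rev (i # ys)) = e0 + A / (A - B)"
    by (simp add: esum_snoc e0_def A_def B_def S_def)
  have G1v: "a * (1 / (1 - sum c S)) = \<alpha> i / (A - B)"
    unfolding sc a_def using A0 D by (simp add: field_simps)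
  have G2v: "a * (sum c S / (1 - sum c S)^2) = \<alpha> i * B / (A - B)^2"
    unfolding sc a_def using A0 D by (simp add: field_simps power2_eq_square)
  have eqf1: "pweight Ed \<alpha> (h x) = (\<lambda>(p,u). pweight Ed \<alpha> p * (a * prod_list (map c u))) x"
    if "x \<in> Wr ys \<times> lists S" for x using that pwh by auto
  have Z: "(pweight Ed \<alpha> has_sum T_ord Ed \<alpha> (rev (i # ys))) (Wr (i # ys))"
  proof -
    have "((\<lambda>x. pweight Ed \<alpha> (h x)) has_sum T0 * (a * (1 / (1 - sum c S)))) (Wr ys \<times> lists S)"
      by (rule has_sum_cong[THEN iffD2], erule eqf1, unfold T0_def, rule P1)
    then show ?thesis unfolding Wi has_sum_reindex[OF inj] o_def T1 G1v .
  qed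
  have eqf2: "real (length (h x)) * pweight Ed \<alpha> (h x) =
      (\<lambda>(p,u). real (length p) * pweight Ed \<alpha> p * (a * prod_list (map c u))) x +
      (\<lambda>(p,u). pweight Ed \<alpha> p * (a * prod_list (map c u))) x +
      (\<lambda>(p,u). pweight Ed \<alpha> p * (a * (real (length u) * prod_list (map c u)))) x"
    if xS: "x \<in> Wr ys \<times> lists S" for x
  proof -
    obtain p u where x: "x = (p, u)" and pu: "p \<in> Wr ys" "u \<in> lists S" using xS by (cases x) simp
    show ?thesis unfolding x using pwh[OF pu] lenh[of p u] by (simp add: algebra_simps)
  qed
  have L: "((\<lambda>w. real (length w) * pweight Ed \<alpha> w) has_sum E_ord Ed \<alpha> (rev (i # ys))) (Wr (i # ys))"
  proof -
    have "((\<lambda>x. real (length (h x)) * pweight Ed \<alpha> (h x)) has_sum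
        E_ord Ed \<alpha> (rev ys) * (a * (1 / (1 - sum c S))) + T0 * (a * (1 / (1 - sum c S))) +
        T0 * (a * (sum c S / (1 - sum c S)^2))) (Wr ys \<times> lists S)"
      apply (rule has_sum_cong[THEN iffD2], erule eqf2)
      by (use has_sum_add[OF has_sum_add[OF P2 P1] P3] in \<open>simp add: T0_def case_prod_unfold\<close>)
    moreover have "E_ord Ed \<alpha> (rev ys) * (a * (1 / (1 - sum c S))) + T0 * (a * (1 / (1 - sum c S))) +
        T0 * (a * (sum c S / (1 - sum c S)^2)) = E_ord Ed \<alpha> (rev (i # ys))"
    proof -
      have "E_ord Ed \<alpha> (rev (i # ys)) = (e0 + A / (A - B)) * (T0 * (\<alpha> i / (A - B)))"
        by (simp only: E_ord_esum e1 T1)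
      also have "\<dots> = e0 * T0 * (\<alpha> i / (A - B)) + T0 * (\<alpha> i / (A - B)) + T0 * (\<alpha> i * B / (A - B)^2)"
      proof -
        define d where "d = A - B"
        have Ad: "A = B + d" and d0: "d \<noteq> 0" using D by (auto simp: d_def)
        show ?thesis unfolding d_def[symmetric] Ad using d0
          by (simp add: field_simps power2_eq_square)
      qed
      finally show ?thesis unfolding E0 G1v G2v by simp
    qed
    ultimately show ?thesis unfolding Wi has_sum_reindex[OF inj] o_def by simp
  qed
  show ?case using Z L by simp
qed

theorem mainTheorem5:
  fixes n :: nat and Ed :: "nat \<Rightarrow> nat \<Rightarrow> bool" and \<alpha> :: "nat \<Rightarrow> real"
  assumes graph: "simple_graph_on {1..n} Ed"
    and conn: "graph_connected {1..n} Ed"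
    and pos: "\<forall>i\<in>{1..n}. \<alpha> i > 0"
    and distr: "(\<Sum>i\<in>{1..n}. \<alpha> i) = 1"
    and stab: "\<forall>I\<in>indep_sets {1..n} Ed. asum \<alpha> I < asum \<alpha> (nbrs Ed I)"
  shows "((\<lambda>w. real (length w) * stat_pi {1..n} Ed \<alpha> w) has_sum
           (inverse (1 + (\<Sum>I\<in>indep_sets {1..n} Ed. T_set Ed \<alpha> I)) *
            (\<Sum>I\<in>indep_sets {1..n} Ed. E_set Ed \<alpha> I)))
         (states {1..n} Ed)"
proof -
  define V :: "nat set" where "V = {1..n}"
  define Ind where "Ind = indep_sets V Ed"
  define B where "B I = (\<Union>xs\<in>permutations_of_set I. Wr (rev xs))" for I
  have finInd: "finite Ind"
    unfolding Ind_def indep_sets_def V_def by (rule finite_subset[of _ "Pow {1..n}"]) auto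
  have Bset: "set w = I" if "w \<in> B I" for w I
    using that Wr_set by (auto simp: B_def permutations_of_set_def)
  have cover: "states V Ed = insert [] (\<Union>I\<in>Ind. B I)"
  proof (intro equalityI subsetI)
    fix w assume w: "w \<in> states V Ed"
    show "w \<in> insert [] (\<Union>I\<in>Ind. B I)"
    proof (cases "w = []")
      case False
      have "set w \<in> Ind" using w False by (auto simp: Ind_def indep_sets_def states_def)
      moreover have "rev (remdups (rev w)) \<in> permutations_of_set (set w)"
        by (auto simp: permutations_of_set_def)
      ultimately show ?thesis using Wr_cover[of w] unfolding B_def by force
    qed simp
  next
    fix w assume "w \<in> insert [] (\<Union>I\<in>Ind. B I)"
    then show "w \<in> states V Ed"
      using Bset by (auto simp: states_def Ind_def indep_sets_def)
  qed
  have blocks: "(pweight Ed \<alpha> has_sum T_ord Ed \<alpha> xs) (Wr (rev xs)) \<and>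
      ((\<lambda>w. real (length w) * pweight Ed \<alpha> w) has_sum E_ord Ed \<alpha> xs) (Wr (rev xs))"
    if I: "I \<in> Ind" and xs: "xs \<in> permutations_of_set I" for I xs
  proof -
    have sx: "set xs = I" "distinct xs" using xs by (auto simp: permutations_of_set_def)
    have IV: "I \<subseteq> V" "\<forall>i\<in>I. \<forall>j\<in>I. \<not> Ed i j" using I by (auto simp: Ind_def indep_sets_def)
    have "(pweight Ed \<alpha> has_sum T_ord Ed \<alpha> (rev (rev xs))) (Wr (rev xs)) \<and>
      ((\<lambda>w. real (length w) * pweight Ed \<alpha> w) has_sum E_ord Ed \<alpha> (rev (rev xs))) (Wr (rev xs))"
    proof (rule Wr_sum)
      show "distinct (rev xs)" using sx by simp
      show "\<forall>x\<in>set (rev xs). \<alpha> x > 0" using sx IV pos by (auto simp: V_def)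
      show "\<forall>T. T \<subseteq> set (rev xs) \<longrightarrow> T \<noteq> {} \<longrightarrow> asum \<alpha> T < asum \<alpha> (nbrs Ed T)"
      proof (intro allI impI)
        fix T assume T: "T \<subseteq> set (rev xs)" "T \<noteq> {}"
        have "T \<in> indep_sets {1..n} Ed" using T sx IV by (auto simp: indep_sets_def V_def)
        then show "asum \<alpha> T < asum \<alpha> (nbrs Ed T)" using stab by blast
      qed
    qed
    then show ?thesis by simp
  qed
  have disjW: "Wr (rev xs) \<inter> Wr (rev xs') = {}"
    if "xs \<in> permutations_of_set I" "xs' \<in> permutations_of_set I" "xs \<noteq> xs'" for I xs xs'
  proof (rule ccontr)
    assume "Wr (rev xs) \<inter> Wr (rev xs') \<noteq> {}"
    then obtain w where w: "w \<in> Wr (rev xs)" "w \<in> Wr (rev xs')" by blast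
    have "remdups (rev w) = rev xs"
      by (rule Wr_remdups[OF _ w(1)]) (use that in \<open>simp add: permutations_of_set_def\<close>)
    moreover have "remdups (rev w) = rev xs'"
      by (rule Wr_remdups[OF _ w(2)]) (use that in \<open>simp add: permutations_of_set_def\<close>)
    ultimately have "rev xs = rev xs'" by simp
    then show False using that(3) by simp
  qed
  have blockT: "(pweight Ed \<alpha> has_sum T_set Ed \<alpha> I) (B I)" if "I \<in> Ind" for I
    unfolding B_def T_set_def
    by (rule sum_has_sum) (use blocks[OF that] disjW in auto)
  have blockE: "((\<lambda>w. real (length w) * pweight Ed \<alpha> w) has_sum E_set Ed \<alpha> I) (B I)" if "I \<in> Ind" for I
    unfolding B_def E_set_def
    by (rule sum_has_sum) (use blocks[OF that] disjW in auto)
  have disjB: "B I \<inter> B I' = {}" if "I \<noteq> I'" for I I'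
    using Bset that by blast
  have nil: "[] \<notin> (\<Union>I\<in>Ind. B I)"
    using Bset by (fastforce simp: Ind_def indep_sets_def)
  have ZT: "(pweight Ed \<alpha> has_sum (1 + (\<Sum>I\<in>Ind. T_set Ed \<alpha> I))) (states V Ed)"
    unfolding cover using has_sum_insert[OF nil sum_has_sum[OF finInd blockT disjB]]
    by (simp add: pweight_def)
  have LE: "((\<lambda>w. real (length w) * pweight Ed \<alpha> w) has_sum (\<Sum>I\<in>Ind. E_set Ed \<alpha> I)) (states V Ed)"
    unfolding cover using has_sum_insert[OF nil sum_has_sum[OF finInd blockE disjB]]
    by simp
  have Zeq: "(\<Sum>\<^sub>\<infinity>u\<in>states V Ed. pweight Ed \<alpha> u) = 1 + (\<Sum>I\<in>Ind. T_set Ed \<alpha> I)"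
    using ZT by (rule infsumI)
  have "((\<lambda>w. inverse (1 + (\<Sum>I\<in>Ind. T_set Ed \<alpha> I)) * (real (length w) * pweight Ed \<alpha> w)) has_sum
     (inverse (1 + (\<Sum>I\<in>Ind. T_set Ed \<alpha> I)) * (\<Sum>I\<in>Ind. E_set Ed \<alpha> I))) (states V Ed)"
    by (rule has_sum_cmult_right[OF LE])
  then show ?thesis
    unfolding stat_pi_def V_def[symmetric] Ind_def[symmetric] Zeq
    by (simp add: algebra_simps)
qed

end
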